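(* There is an absolute constant $c$ such that the following holds. Let $P$ be a finite set of points in $\mathbb{R}^2$, each $p\in P$ having a transmission radius $r(p)>0$. Let $C$ be a clique in the intersection graph $\mathcal{G}^{\times}(\mathcal{D}_P)$ and let $P(C)\subseteq P$ be the set of points whose transmission disks belong to $C$. Then $P(C)$ can be covered by at most $c$ transitive paths in $\mathcal{G}_{\mathrm{tr}}(P)$, i.e. $P(C)$ is the union of at most $c$ sets each of whose points can be ordered as a transitive path.
   Context: The transmission graph $\mathcal{G}_{\mathrm{tr}}(P)$ is the directed graph on $P$ with an arc $(p,q)$ iff $|pq|\leq r(p)$ (Euclidean distance). The transmission disk of $p$ is $D_p$, the closed disk of radius $r(p)$ centered at $p$, and $\mathcal{D}_P=\{D_p:p\in P\}$. $\mathcal{G}^{\times}(\mathcal{D}_P)$ is the undirected graph with node set $\mathcal{D}_P$ and an edge between $D_p,D_q$ iff $D_p\cap D_q\neq\emptyset$. A transitive path is a sequence $q_1,\ldots,q_k$ of distinct points of $P$ such that $(q_i,q_j)$ is an arc of $\mathcal{G}_{\mathrm{tr}}(P)$ for all $1\le i<j\le k$. *)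

theory Defs
  imports "HOL-Analysis.Analysis"
begin

definition tr_arc :: "(real^2) set \<Rightarrow> (real^2 \<Rightarrow> real) \<Rightarrow> real^2 \<Rightarrow> real^2 \<Rightarrow> bool" where
  "tr_arc P r p q \<longleftrightarrow> p \<in> P \<and> q \<in> P \<and> dist p q \<le> r p"

definition tr_disk :: "(real^2 \<Rightarrow> real) \<Rightarrow> real^2 \<Rightarrow> (real^2) set" where
  "tr_disk r p = cball p (r p)"

definition transitive_path :: "(real^2) set \<Rightarrow> (real^2 \<Rightarrow> real) \<Rightarrow> (real^2) list \<Rightarrow> bool" where
  "transitive_path P r qs \<longleftrightarrow> distinct qs \<and> set qs \<subseteq> P \<and>
     (\<forall>i j. i < j \<and> j < length qs \<longrightarrow> tr_arc P r (qs ! i) (qs ! j))"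

text \<open>The set of points P(C) whose disks form a clique C in the intersection graph of the disks.\<close>
definition disk_clique :: "(real^2) set \<Rightarrow> (real^2 \<Rightarrow> real) \<Rightarrow> (real^2) set \<Rightarrow> bool" where
  "disk_clique P r Q \<longleftrightarrow> Q \<subseteq> P \<and>
     (\<forall>p\<in>Q. \<forall>q\<in>Q. tr_disk r p \<inter> tr_disk r q \<noteq> {})"

end

theory Submission
  imports Defs
begin
lemma far_ineq_aux:
  fixes a b R \<rho> :: real
  assumes "\<rho> > 0" "4*\<rho> \<le> b" "b \<le> a" "a \<le> R + \<rho>"
  shows "(a-b)^2 + a*b/4 \<le> R^2"
proof -
  define m where "m = 4*\<rho>"
  have R: "R \<ge> 3*\<rho>" using assms by linarith
  have ga: "a*a/4 \<le> R^2"
  proof -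
    have "a*a \<le> (R+\<rho>)*(R+\<rho>)" using assms by (intro mult_mono) auto
    also have "\<dots> \<le> (2*R)*(2*R)" using R assms by (intro mult_mono) auto
    also have "\<dots> = 4*R^2" by (simp add: power2_eq_square)
    finally show ?thesis by simp
  qed
  have hm: "(a-m)^2 + a*m/4 \<le> R^2"
  proof -
    have "(a-m)^2 + a*m/4 - ((R+\<rho>-m)^2 + (R+\<rho>)*m/4) = (a - (R+\<rho>)) * (a + (R+\<rho>) - 7*m/4)"
      by (simp add: power2_eq_square field_simps)
    also have "\<dots> \<le> 0" using assms R unfolding m_def by (intro mult_nonpos_nonneg) auto
    finally have "(a-m)^2 + a*m/4 \<le> (R+\<rho>-m)^2 + (R+\<rho>)*m/4" by simp
    also have "\<dots> = R^2 - 5*R*\<rho> + 10*\<rho>^2" unfolding m_def by (simp add: power2_eq_square field_simps)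
    also have "\<dots> \<le> R^2"
    proof -
      have "(2*\<rho>)*\<rho> \<le> R*\<rho>" using R assms by (intro mult_right_mono) auto
      then show ?thesis by (simp add: power2_eq_square field_simps)
    qed
    finally show ?thesis .
  qed
  show ?thesis
  proof (cases "b + m \<le> 7*a/4")
    case True
    have "(a-b)^2 + a*b/4 - ((a-m)^2 + a*m/4) = (b-m)*(b+m-7*a/4)"
      by (simp add: power2_eq_square field_simps)
    also have "\<dots> \<le> 0" using True assms unfolding m_def by (intro mult_nonneg_nonpos) auto
    finally show ?thesis using hm by simp
  next
    case False
    have "(a-b)^2 + a*b/4 - a*a/4 = (b-a)*(b - 3*a/4)"
      by (simp add: power2_eq_square field_simps)
    also have "\<dots> \<le> 0" using False assms unfolding m_def by (intro mult_nonpos_nonneg) auto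
    finally show ?thesis using ga by simp
  qed
qed
lemma far_ineq:
  fixes a b R \<rho> :: real
  assumes "\<rho> > 0" "4*\<rho> \<le> a" "4*\<rho> \<le> b" "a \<le> R + \<rho>" "b \<le> R + \<rho>"
  shows "(a-b)^2 + a*b/4 \<le> R^2"
proof (cases "b \<le> a")
  case True then show ?thesis using far_ineq_aux[of \<rho> b a R] assms by simp
next
  case False then show ?thesis using far_ineq_aux[of \<rho> a b R] assms
    by (simp add: power2_commute mult.commute)
qed

lemma floor_range: fixes x :: real and n :: int assumes "\<bar>x\<bar> \<le> of_int n" shows "\<lfloor>x\<rfloor> \<in> {-n..n}"
  using assms by (auto simp: le_floor_iff floor_le_iff abs_le_iff)

lemma floor_eq_close: fixes x y :: real assumes "\<lfloor>x\<rfloor> = \<lfloor>y\<rfloor>" shows "\<bar>x - y\<bar> < 1"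
proof -
  have "of_int \<lfloor>x\<rfloor> \<le> x" "x < of_int \<lfloor>x\<rfloor> + 1" "of_int \<lfloor>y\<rfloor> \<le> y" "y < of_int \<lfloor>y\<rfloor> + 1"
    by linarith+
  then have "of_int \<lfloor>y\<rfloor> \<le> x" "x < of_int \<lfloor>y\<rfloor> + 1" using assms by simp_all
  then show ?thesis using \<open>of_int \<lfloor>y\<rfloor> \<le> y\<close> \<open>y < of_int \<lfloor>y\<rfloor> + 1\<close> unfolding abs_less_iff by linarith
qed

lemma sorted_path:
  assumes "finite S" "S \<subseteq> P" "\<forall>p\<in>S. \<forall>q\<in>S. p \<noteq> q \<longrightarrow> dist p q \<le> max (r p) (r q)"
  shows "\<exists>xs. transitive_path P r xs \<and> set xs = S"
proof -
  obtain ys where ys: "distinct ys" "set ys = S" using finite_distinct_list[OF assms(1)] by blast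
  define xs where "xs = sort_key (\<lambda>x. - r x) ys"
  have d: "distinct xs" "set xs = S" using ys by (auto simp: xs_def)
  have so: "sorted (map (\<lambda>x. - r x) xs)" by (simp add: xs_def)
  have arc: "tr_arc P r (xs ! i) (xs ! j)" if ij: "i < j" "j < length xs" for i j
  proof -
    have "(map (\<lambda>x. - r x) xs) ! i \<le> (map (\<lambda>x. - r x) xs) ! j"
      using so ij unfolding sorted_iff_nth_mono by simp
    then have rle: "r (xs ! j) \<le> r (xs ! i)" using ij by simp
    have ne: "xs ! i \<noteq> xs ! j" using d(1) ij by (simp add: nth_eq_iff_index_eq)
    have mem: "xs ! i \<in> S" "xs ! j \<in> S" using d(2) ij by auto
    have "dist (xs!i) (xs!j) \<le> max (r (xs!i)) (r (xs!j))" using assms(3) mem ne by blast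
    then show ?thesis unfolding tr_arc_def using mem assms(2) rle by auto
  qed
  show ?thesis unfolding transitive_path_def using d arc assms(2) by blast
qed

lemma cover_lemma:
  fixes lab :: "real^2 \<Rightarrow> 'l"
  assumes "finite Q" "Q \<subseteq> P" "lab ` Q \<subseteq> L" "finite L"
   "\<forall>p\<in>Q. \<forall>q\<in>Q. lab p = lab q \<and> p \<noteq> q \<longrightarrow> dist p q \<le> max (r p) (r q)"
  shows "\<exists>paths. finite paths \<and> card paths \<le> card L \<and> (\<forall>qs\<in>paths. transitive_path P r qs) \<and> (\<Union>qs\<in>paths. set qs) = Q"
proof -
  have "\<forall>l\<in>lab`Q. \<exists>xs. transitive_path P r xs \<and> set xs = {p\<in>Q. lab p = l}"
  proof
    fix l assume "l \<in> lab ` Q"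
    show "\<exists>xs. transitive_path P r xs \<and> set xs = {p\<in>Q. lab p = l}"
      by (rule sorted_path) (use assms in auto)
  qed
  then obtain f where f: "\<forall>l\<in>lab`Q. transitive_path P r (f l) \<and> set (f l) = {p\<in>Q. lab p = l}"
    by metis
  have c1: "card (f ` lab ` Q) \<le> card (lab ` Q)" by (rule card_image_le) (use assms in auto)
  have c2: "card (lab ` Q) \<le> card L" by (rule card_mono) (use assms in auto)
  show ?thesis
  proof (intro exI conjI)
    show "finite (f ` lab ` Q)" using assms by auto
    show "card (f ` lab ` Q) \<le> card L" using c1 c2 by linarith
    show "\<forall>qs\<in>f ` lab ` Q. transitive_path P r qs" using f by auto
    show "(\<Union>qs\<in>f ` lab ` Q. set qs) = Q" using f by auto
  qed
qed

lemma norm_l1_2: fixes v :: "real^2" shows "norm v \<le> \<bar>v$1\<bar> + \<bar>v$2\<bar>"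
  using norm_le_l1_cart[of v] by (simp add: sum_2)

lemma near_close:
  fixes v w :: "real^2" and s :: real
  assumes "s > 0" "\<lfloor>(v$1)/s\<rfloor> = \<lfloor>(w$1)/s\<rfloor>" "\<lfloor>(v$2)/s\<rfloor> = \<lfloor>(w$2)/s\<rfloor>"
  shows "norm (v - w) < 2 * s"
proof -
  have c: "\<bar>v$i - w$i\<bar> < s" if "\<lfloor>v$i/s\<rfloor> = \<lfloor>w$i/s\<rfloor>" for i
  proof -
    have "\<bar>v$i/s - w$i/s\<bar> < 1" using floor_eq_close[OF that] .
    then have "\<bar>v$i - w$i\<bar> / s < 1" using assms(1) by (simp add: diff_divide_distrib[symmetric])
    then show ?thesis using assms(1) by (simp add: divide_less_eq)
  qed
  have "norm (v - w) \<le> \<bar>(v-w)$1\<bar> + \<bar>(v-w)$2\<bar>" by (rule norm_l1_2)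
  also have "\<dots> < 2 * s" using c[OF assms(2)] c[OF assms(3)] by simp
  finally show ?thesis .
qed

lemma far_close:
  fixes v w :: "real^2"
  assumes "v \<noteq> 0" "w \<noteq> 0" "\<lfloor>4*(v$1/norm v)\<rfloor> = \<lfloor>4*(w$1/norm w)\<rfloor>"
     "\<lfloor>4*(v$2/norm v)\<rfloor> = \<lfloor>4*(w$2/norm w)\<rfloor>"
  shows "norm (v - w)^2 \<le> (norm v - norm w)^2 + norm v * norm w / 4"
proof -
  define a where "a = norm v"
  define b where "b = norm w"
  have a0: "a > 0" and b0: "b > 0" using assms by (auto simp: a_def b_def)
  define u where "u = (1/a) *\<^sub>R v"
  define u' where "u' = (1/b) *\<^sub>R w"
  have c: "\<bar>u$i - u'$i\<bar> < 1/4" if "\<lfloor>4*(v$i/norm v)\<rfloor> = \<lfloor>4*(w$i/norm w)\<rfloor>" for i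
  proof -
    have "\<bar>4*(v$i/norm v) - 4*(w$i/norm w)\<bar> < 1" using floor_eq_close[OF that] .
    moreover have "u$i - u'$i = v$i/norm v - w$i/norm w" by (simp add: u_def u'_def a_def b_def)
    ultimately show ?thesis unfolding abs_less_iff by linarith
  qed
  have "norm (u - u') \<le> \<bar>(u-u')$1\<bar> + \<bar>(u-u')$2\<bar>" by (rule norm_l1_2)
  also have "\<dots> < 1/2" using c[OF assms(3)] c[OF assms(4)] by simp
  finally have nu: "norm (u - u') < 1/2" .
  have nu2: "norm (u - u')^2 \<le> 1/4"
  proof -
    have "norm (u - u')^2 \<le> (1/2)^2" using nu by (intro power_mono) auto
    then show ?thesis by (simp add: power2_eq_square)
  qed
  have id1: "norm (v - w)^2 = a^2 + b^2 - 2 * (v \<bullet> w)"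
    by (simp add: a_def b_def power2_norm_eq_inner inner_diff_left inner_diff_right inner_commute)
  have id2: "norm (u - u')^2 = norm u ^2 + norm u' ^2 - 2 * (u \<bullet> u')"
    by (simp add: power2_norm_eq_inner inner_diff_left inner_diff_right inner_commute)
  have "norm u = 1" "norm u' = 1" using a0 b0 by (auto simp: u_def u'_def a_def b_def)
  moreover have "u \<bullet> u' = (v \<bullet> w) / (a*b)" by (simp add: u_def u'_def)
  ultimately have "norm (u - u')^2 = 2 - 2 * ((v \<bullet> w) / (a*b))" using id2 by simp
  then have "v \<bullet> w = a*b - a*b*norm (u - u')^2 / 2" using a0 b0 by (simp add: field_simps)
  then have "norm (v - w)^2 = (a-b)^2 + a*b*norm (u - u')^2" using id1 by (simp add: power2_eq_square algebra_simps)
  also have "\<dots> \<le> (a-b)^2 + a*b/4"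
  proof -
    have "a*b*norm (u - u')^2 \<le> a*b*(1/4)" using a0 b0 nu2 by (intro mult_left_mono) auto
    then show ?thesis by simp
  qed
  finally show ?thesis by (simp add: a_def b_def)
qed

lemma abs4: fixes y :: real assumes "\<bar>y\<bar> \<le> 1" shows "\<bar>4*y\<bar> \<le> of_int 4"
  using assms by (simp add: abs_mult)

theorem lemma3:
  shows "\<exists>c::nat. \<forall>(P :: (real^2) set) (r :: real^2 \<Rightarrow> real) (Q :: (real^2) set).
     finite P \<and> (\<forall>p\<in>P. r p > 0) \<and> disk_clique P r Q \<longrightarrow>
     (\<exists>paths :: (real^2) list set. finite paths \<and> card paths \<le> c \<and>
        (\<forall>qs\<in>paths. transitive_path P r qs) \<and> (\<Union>qs\<in>paths. set qs) = Q)"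
proof -
  define L :: "((int\<times>int)+(int\<times>int)) set" where "L = ({-8..8}\<times>{-8..8}) <+> ({-4..4}\<times>{-4..4})"
  have finL: "finite L" by (simp add: L_def)
  show ?thesis
  proof (rule exI[of _ "card L"], intro allI impI)
    fix P :: "(real^2) set" and r :: "real^2 \<Rightarrow> real" and Q :: "(real^2) set"
    assume H: "finite P \<and> (\<forall>p\<in>P. r p > 0) \<and> disk_clique P r Q"
    have QP: "Q \<subseteq> P" and cl: "\<forall>p\<in>Q. \<forall>q\<in>Q. tr_disk r p \<inter> tr_disk r q \<noteq> {}"
      using H by (auto simp: disk_clique_def)
    have finQ: "finite Q" using H QP finite_subset by blast
    have rpos: "\<forall>p\<in>Q. r p > 0" using H QP by auto
    show "\<exists>paths :: (real^2) list set. finite paths \<and> card paths \<le> card L \<and>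
        (\<forall>qs\<in>paths. transitive_path P r qs) \<and> (\<Union>qs\<in>paths. set qs) = Q"
    proof (cases "Q = {}")
      case True
      then show ?thesis by (intro exI[of _ "{}"]) auto
    next
      case False
      define \<rho> where "\<rho> = Min (r ` Q)"
      have "\<rho> \<in> r ` Q" unfolding \<rho>_def using finQ False by (intro Min_in) auto
      then obtain x0 where oQ: "x0 \<in> Q" and ro: "r x0 = \<rho>" by auto
      have rmin: "\<forall>p\<in>Q. \<rho> \<le> r p"
      proof
        fix p assume "p \<in> Q"
        then show "\<rho> \<le> r p" unfolding \<rho>_def using finQ by (intro Min_le) auto
      qed
      have rho0: "\<rho> > 0" using rpos oQ ro by auto
      have dpo: "dist p x0 \<le> r p + \<rho>" if "p \<in> Q" for p
      proof -
        have "tr_disk r p \<inter> tr_disk r x0 \<noteq> {}" using cl that oQ by simp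
        then obtain z where "z \<in> tr_disk r p \<inter> tr_disk r x0" by (metis ex_in_conv)
        then have "dist p z \<le> r p" "dist x0 z \<le> r x0" by (auto simp: tr_disk_def)
        then show ?thesis using dist_triangle[of p x0 z] dist_commute[of z x0] ro by linarith
      qed
      define lab :: "real^2 \<Rightarrow> (int\<times>int)+(int\<times>int)" where
        "lab p = (if norm (p - x0) \<le> 4*\<rho>
           then Inl (\<lfloor>((p-x0)$1)/(\<rho>/2)\<rfloor>, \<lfloor>((p-x0)$2)/(\<rho>/2)\<rfloor>)
           else Inr (\<lfloor>4*((p-x0)$1/norm (p-x0))\<rfloor>, \<lfloor>4*((p-x0)$2/norm (p-x0))\<rfloor>))" for p
      have labn: "lab x = Inl (\<lfloor>((x-x0)$1)/(\<rho>/2)\<rfloor>, \<lfloor>((x-x0)$2)/(\<rho>/2)\<rfloor>)"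
        if "norm (x - x0) \<le> 4*\<rho>" for x using that by (simp add: lab_def)
      have labf: "lab x = Inr (\<lfloor>4*((x-x0)$1/norm (x-x0))\<rfloor>, \<lfloor>4*((x-x0)$2/norm (x-x0))\<rfloor>)"
        if "\<not> norm (x - x0) \<le> 4*\<rho>" for x using that by (simp add: lab_def)
      have labL: "lab ` Q \<subseteq> L"
      proof
        fix l assume "l \<in> lab ` Q"
        then obtain p where l: "l = lab p" by auto
        show "l \<in> L"
        proof (cases "norm (p - x0) \<le> 4*\<rho>")
          case True
          have b: "\<lfloor>((p-x0)$i)/(\<rho>/2)\<rfloor> \<in> {-8..8}" for i
          proof (rule floor_range)
            have "\<bar>(p-x0)$i\<bar> \<le> 4*\<rho>" using True component_le_norm_cart[of "p-x0" i] by linarith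
            then show "\<bar>((p-x0)$i)/(\<rho>/2)\<bar> \<le> of_int 8" using rho0 by (simp add: abs_divide divide_le_eq)
          qed
          show ?thesis unfolding l labn[OF True] L_def by (rule InlI) (use b[of 1] b[of 2] in simp)
        next
          case False
          have b: "\<lfloor>4*((p-x0)$i/norm (p-x0))\<rfloor> \<in> {-4..4}" for i
          proof (rule floor_range)
            have n0: "norm (p - x0) > 0" using False rho0 by linarith
            have "\<bar>(p-x0)$i\<bar> \<le> norm (p-x0)" using component_le_norm_cart[of "p-x0" i] .
            then have "\<bar>(p-x0)$i/norm (p-x0)\<bar> \<le> 1" using n0 by (simp add: abs_divide divide_le_eq)
            then show "\<bar>4*((p-x0)$i/norm (p-x0))\<bar> \<le> of_int 4" by (rule abs4)
          qed
          show ?thesis unfolding l labf[OF False] L_def by (rule InrI) (use b[of 1] b[of 2] in simp)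
        qed
      qed
      have good: "\<forall>p\<in>Q. \<forall>q\<in>Q. lab p = lab q \<and> p \<noteq> q \<longrightarrow> dist p q \<le> max (r p) (r q)"
      proof (intro ballI impI)
        fix p q assume pQ: "p \<in> Q" and qQ: "q \<in> Q" and e: "lab p = lab q \<and> p \<noteq> q"
        have dpq: "dist p q = norm ((p - x0) - (q - x0))" by (simp add: dist_norm)
        show "dist p q \<le> max (r p) (r q)"
        proof (cases "norm (p - x0) \<le> 4*\<rho>")
          case True
          have qn: "norm (q - x0) \<le> 4*\<rho>"
          proof (rule ccontr)
            assume "\<not> norm (q - x0) \<le> 4*\<rho>"
            then show False using e labn[OF True] labf[of q] by simp
          qed
          have "\<lfloor>((p-x0)$1)/(\<rho>/2)\<rfloor> = \<lfloor>((q-x0)$1)/(\<rho>/2)\<rfloor>" "\<lfloor>((p-x0)$2)/(\<rho>/2)\<rfloor> = \<lfloor>((q-x0)$2)/(\<rho>/2)\<rfloor>"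
            using e labn[OF True] labn[OF qn] by simp_all
          then have "norm ((p - x0) - (q - x0)) < 2 * (\<rho>/2)" using rho0 by (intro near_close) auto
          then show ?thesis using dpq rmin pQ by auto
        next
          case False
          have qn: "\<not> norm (q - x0) \<le> 4*\<rho>"
          proof
            assume "norm (q - x0) \<le> 4*\<rho>"
            then show False using e labf[OF False] labn[of q] by simp
          qed
          have eq: "\<lfloor>4*((p-x0)$1/norm (p-x0))\<rfloor> = \<lfloor>4*((q-x0)$1/norm (q-x0))\<rfloor>" "\<lfloor>4*((p-x0)$2/norm (p-x0))\<rfloor> = \<lfloor>4*((q-x0)$2/norm (q-x0))\<rfloor>"
            using e labf[OF False] labf[OF qn] by simp_all
          have n0: "p - x0 \<noteq> 0" "q - x0 \<noteq> 0" using False qn rho0 by auto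
          define R where "R = max (r p) (r q)"
          have a1: "norm (p - x0) \<le> R + \<rho>" using dpo[OF pQ] unfolding R_def by (simp add: dist_norm)
          have a2: "norm (q - x0) \<le> R + \<rho>" using dpo[OF qQ] unfolding R_def by (simp add: dist_norm)
          have "norm ((p - x0) - (q - x0))^2 \<le> (norm (p-x0) - norm (q-x0))^2 + norm (p-x0) * norm (q-x0) / 4"
            using far_close[OF n0 eq] .
          also have "\<dots> \<le> R^2" using False qn a1 a2 rho0 by (intro far_ineq) auto
          finally have "norm ((p - x0) - (q - x0))^2 \<le> R^2" .
          moreover have "R \<ge> 0" using rpos pQ unfolding R_def by (simp add: le_max_iff_disj less_imp_le)
          ultimately have "norm ((p - x0) - (q - x0)) \<le> R" using power2_le_imp_le by blast
          then show ?thesis using dpq R_def by simp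
        qed
      qed
      show ?thesis by (rule cover_lemma[OF finQ QP labL finL good])
    qed
  qed
qed

end
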